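(* Assume the setting below. Let $j\in\mathbb{N}$ and let $w\in F_j$ with $\mathrm{len}(w)>(1,0)$. Then \[|Z_j(w)|\le \mathrm{len}_B(w)\,m_j\,(|Y_j|+|Y_j'|).\]
   Context: Setting: $Q,G$ are groups and $X=(X_n)_{n\in\mathbb{N}}$ is a sequence of finite sets with $|X_n|\ge2$, each with actions of $Q$ and $G$; $Q_n,G_n\subseteq\mathrm{Sym}(X_n)$ are the images and $A_n=\langle Q_n,G_n\rangle$. Assume for all $n$: (A1) $G,Q$ finitely generated; (A2) $Q$ perfect; (A3) $A_n$ is transitive on $X_n$ and generated by the $G_n$-conjugates of $Q_n$. $\mathcal{T}_j$ is the rooted tree of finite words $x_j\cdots x_k$ ($x_i\in X_i$), $\mathrm{Aut}(\mathcal{T}_j)$ its root-fixing automorphisms; sections $h|_u\in\mathrm{Aut}(\mathcal{T}_{j+\ell})$ (for $u$ of level $\ell$) are defined by $h(uv)=h(u)h|_u(v)$. $A_j$ acts by rooted automorphisms $a\cdot x_jx_{j+1}\cdots x_k=(ax_j)x_{j+1}\cdots x_k$ and is identified with its image; $q_j,g_j$ denote images of $q\in Q,g\in G$ in $A_j$. A point $o\in X_i$ is fixed in each $X_i$; $\mathcal{S}=\prod_{i\ge1}(X_i\setminus\{o\})$. For $\alpha\in\mathcal{S}$, $q\in Q$, $\tilde q^\alpha_{[j]}\in\mathrm{Aut}(\mathcal{T}_j)$ acts trivially on the first level with section at $x\in X_j$ equal to $\tilde q^\alpha_{[j+1]}$ if $x=o$, $q_{j+1}$ if $x=\alpha_j$,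 identity otherwise; analogously $\tilde g^\beta_{[j]}$ for $\beta\in\mathcal{S}$, $g\in G$. Let $\Gamma_j^{\alpha,\beta}=\langle A_j,\tilde q^\alpha_{[j]},\tilde g^\beta_{[j]}: q\in Q,g\in G\rangle$. For every $i$, $Y_i,Y_i'\subseteq X_i\setminus\{o\}$ are non-empty disjoint subsets, $\mathcal{Y}=\prod_iY_i$, $\mathcal{Y}'=\prod_iY_i'$, and $m_j$ is the maximal order of an element of $A_j$. For $(\alpha,\beta)\in\mathcal{Y}\times\mathcal{Y}'$ we have $\alpha_i\neq\beta_i$ for all $i$, so the elements $\tilde q^\alpha_{[j]}$ and $\tilde g^\beta_{[j]}$ commute and there is a homomorphism $f_j^{\alpha,\beta}$ from the free product $F_j=A_j*B$, $B=Q\times G$, onto $\Gamma_j^{\alpha,\beta}$, sending $a\in A_j$ to $a$, $q\in Q$ to $\tilde q^\alpha_{[j]}$ and $g\in G$ to $\tilde g^\beta_{[j]}$. Lengths: each $w\in F_j$ has a unique normal form alternating between non-trivial letters from $A_j$ and from $B$; $\mathrm{len}_B(w)$ and $\mathrm{len}_A(w)$ are the numbers of $B$-letters and $A_j$-letters, and $\mathrm{len}(w)=(\mathrm{len}_B(w),\mathrm{len}_A(w))$, with $\mathbb{Z}\times\mathbb{Z}$ ordered lexicographically ($(b,a)>(b',a')$ iff $b>b'$, or $b=b'$ and $a>a'$). For $\gamma\in\Gamma_j^{\alpha,\beta}$, $\mathrm{len}(\gamma)=(\mathrm{len}_B(\gamma),\mathrm{len}_A(\gamma))$ is the minimum of $\mathrm{len}(w)$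 over $w\in F_j$ with $f_j^{\alpha,\beta}(w)=\gamma$ (for elements of $\Gamma_{j+1}^{\alpha,\beta}$ this is taken with respect to $F_{j+1}$ and $f_{j+1}^{\alpha,\beta}$). Stabilized sections: for $h\in\mathrm{Aut}(\mathcal{T}_j)$ and a vertex $u$, $\ell_u(h)$ is the length of the orbit of $u$ under $\langle h\rangle$ and $h\Vert_u=h^{\ell_u(h)}|_u$; for $x\in X_j$ and $\gamma\in\Gamma_j^{\alpha,\beta}$, $\gamma\Vert_x\in\Gamma_{j+1}^{\alpha,\beta}$. The set $Z_j(w)\subseteq Y_j\times Y_j'$: if $\mathrm{len}_B(w)>1$, it consists of the pairs $(s,t)$ for which there exist a vertex $x\in X_j$ and $(\alpha,\beta)\in\mathcal{Y}\times\mathcal{Y}'$ with $\alpha_j=s$, $\beta_j=t$ and $\mathrm{len}_B(f_j^{\alpha,\beta}(w)\Vert_x)=\mathrm{len}_B(w)$; if $\mathrm{len}_B(w)=1$, it consists of the pairs $(s,t)$ for which there exist $x\in X_j$ and $(\alpha,\beta)\in\mathcal{Y}\times\mathcal{Y}'$ with $\alpha_j=s$, $\beta_j=t$ and $\mathrm{len}(f_j^{\alpha,\beta}(w)\Vert_x)>(1,0)$. *)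

theory Defs
  imports "HOL-Algebra.Algebra"
begin

text \<open>Levels are indexed by n \<ge> 1 (the paper's \<nat> starts at 1, since S is a product over i \<ge> 1).  A vertex of the tree T_j is a finite word
x_j x_{j+1} ... x_k, represented as the list [x_j, ..., x_k].\<close>

definition words :: "(nat \<Rightarrow> 'x set) \<Rightarrow> nat \<Rightarrow> 'x list set" where
  "words XS j = {u. \<forall>i<length u. u ! i \<in> XS (j + i)}"

text \<open>Tree automorphisms of T_j are represented as functions on lists acting as the identity
outside the vertex set of T_j.\<close>
definition extw :: "(nat \<Rightarrow> 'x set) \<Rightarrow> nat \<Rightarrow> ('x list \<Rightarrow> 'x list) \<Rightarrow> 'x list \<Rightarrow> 'x list" where
  "extw XS j h = (\<lambda>u. if u \<in> words XS j then h u else u)"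

text \<open>Section h|_u (u a vertex of T_j), an automorphism of T_{j+|u|}: h(uv) = h(u) h|_u(v).\<close>
definition sectn :: "(nat \<Rightarrow> 'x set) \<Rightarrow> nat \<Rightarrow> ('x list \<Rightarrow> 'x list) \<Rightarrow> 'x list \<Rightarrow> 'x list \<Rightarrow> 'x list" where
  "sectn XS j h u = (\<lambda>v. if v \<in> words XS (j + length u) then drop (length u) (h (u @ v)) else v)"

definition liftA :: "(nat \<Rightarrow> 'x set) \<Rightarrow> nat \<Rightarrow> ('x \<Rightarrow> 'x) \<Rightarrow> 'x list \<Rightarrow> 'x list" where
  "liftA XS j a = extw XS j (\<lambda>u. case u of [] \<Rightarrow> [] | x # v \<Rightarrow> a x # v)"

text \<open>The directed element: trivial on the first level, sectn at o_j is the element of the next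
level, sectn at \<alpha>_j is the rooted automorphism act (j+1), identity elsewhere.\<close>
fun tilde_raw :: "(nat \<Rightarrow> 'x) \<Rightarrow> (nat \<Rightarrow> 'x) \<Rightarrow> (nat \<Rightarrow> 'x \<Rightarrow> 'x) \<Rightarrow> nat \<Rightarrow> 'x list \<Rightarrow> 'x list" where
  "tilde_raw ob \<alpha> act j [] = []"
| "tilde_raw ob \<alpha> act j (x # v) =
     x # (if x = ob j then tilde_raw ob \<alpha> act (Suc j) v
          else if x = \<alpha> j then (case v of [] \<Rightarrow> [] | y # v' \<Rightarrow> act (Suc j) y # v')
          else v)"

definition tilde :: "(nat \<Rightarrow> 'x set) \<Rightarrow> (nat \<Rightarrow> 'x) \<Rightarrow> (nat \<Rightarrow> 'x) \<Rightarrow> (nat \<Rightarrow> 'x \<Rightarrow> 'x) \<Rightarrow> nat \<Rightarrow> 'x list \<Rightarrow> 'x list" where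
  "tilde XS ob \<alpha> act j = extw XS j (tilde_raw ob \<alpha> act j)"

definition Agrp :: "(nat \<Rightarrow> 'x set) \<Rightarrow> ('q, 'a) monoid_scheme \<Rightarrow> ('g, 'b) monoid_scheme
    \<Rightarrow> (nat \<Rightarrow> 'q \<Rightarrow> 'x \<Rightarrow> 'x) \<Rightarrow> (nat \<Rightarrow> 'g \<Rightarrow> 'x \<Rightarrow> 'x) \<Rightarrow> nat \<Rightarrow> ('x \<Rightarrow> 'x) set" where
  "Agrp XS Q G aQ aG n = generate (BijGroup (XS n)) (aQ n ` carrier Q \<union> aG n ` carrier G)"

text \<open>Elements of the free product F_j = A_j * B (B = Q \<times> G) are represented by their unique
normal forms: alternating lists of non-trivial letters, Inl a for a \<in> A_j, Inr (q,g) for (q,g) \<in> B.\<close>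
definition Fj :: "(nat \<Rightarrow> 'x set) \<Rightarrow> ('q, 'a) monoid_scheme \<Rightarrow> ('g, 'b) monoid_scheme
    \<Rightarrow> (nat \<Rightarrow> 'q \<Rightarrow> 'x \<Rightarrow> 'x) \<Rightarrow> (nat \<Rightarrow> 'g \<Rightarrow> 'x \<Rightarrow> 'x) \<Rightarrow> nat \<Rightarrow> (('x \<Rightarrow> 'x) + ('q \<times> 'g)) list set" where
  "Fj XS Q G aQ aG j = {w.
     (\<forall>l \<in> set w. case l of
         Inl a \<Rightarrow> a \<in> Agrp XS Q G aQ aG j \<and> a \<noteq> \<one>\<^bsub>BijGroup (XS j)\<^esub>
       | Inr (q, g) \<Rightarrow> q \<in> carrier Q \<and> g \<in> carrier G \<and> (q, g) \<noteq> (\<one>\<^bsub>Q\<^esub>, \<one>\<^bsub>G\<^esub>))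
   \<and> (\<forall>i. Suc i < length w \<longrightarrow> isl (w ! i) \<noteq> isl (w ! Suc i))}"

definition lenB :: "(('x \<Rightarrow> 'x) + ('q \<times> 'g)) list \<Rightarrow> nat" where
  "lenB w = length (filter (\<lambda>l. \<not> isl l) w)"

definition lenA :: "(('x \<Rightarrow> 'x) + ('q \<times> 'g)) list \<Rightarrow> nat" where
  "lenA w = length (filter isl w)"

text \<open>The homomorphism f_j^{\<alpha>,\<beta>} : F_j \<rightarrow> \<Gamma>_j^{\<alpha>,\<beta>} evaluated on normal forms
(group product = composition of maps).\<close>
definition fj :: "(nat \<Rightarrow> 'x set) \<Rightarrow> (nat \<Rightarrow> 'q \<Rightarrow> 'x \<Rightarrow> 'x) \<Rightarrow> (nat \<Rightarrow> 'g \<Rightarrow> 'x \<Rightarrow> 'x) \<Rightarrow> (nat \<Rightarrow> 'x)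
    \<Rightarrow> nat \<Rightarrow> (nat \<Rightarrow> 'x) \<Rightarrow> (nat \<Rightarrow> 'x) \<Rightarrow> (('x \<Rightarrow> 'x) + ('q \<times> 'g)) list \<Rightarrow> 'x list \<Rightarrow> 'x list" where
  "fj XS aQ aG ob j \<alpha> \<beta> w = foldr (\<lambda>l h. (case l of
        Inl a \<Rightarrow> liftA XS j a
      | Inr (q, g) \<Rightarrow> tilde XS ob \<alpha> (\<lambda>n. aQ n q) j \<circ> tilde XS ob \<beta> (\<lambda>n. aG n g) j) \<circ> h) w id"

text \<open>Length of an element of \<Gamma>_j^{\<alpha>,\<beta>}: lexicographic minimum of len over its preimages in F_j.\<close>
definition glenB where
  "glenB XS Q G aQ aG ob j \<alpha> \<beta> \<gamma> =
     (LEAST b. \<exists>w \<in> Fj XS Q G aQ aG j. fj XS aQ aG ob j \<alpha> \<beta> w = \<gamma> \<and> lenB w = b)"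

definition glenA where
  "glenA XS Q G aQ aG ob j \<alpha> \<beta> \<gamma> =
     (LEAST a. \<exists>w \<in> Fj XS Q G aQ aG j. fj XS aQ aG ob j \<alpha> \<beta> w = \<gamma>
        \<and> lenB w = glenB XS Q G aQ aG ob j \<alpha> \<beta> \<gamma> \<and> lenA w = a)"

definition lex_gt :: "nat \<times> nat \<Rightarrow> nat \<times> nat \<Rightarrow> bool" where
  "lex_gt p p' \<longleftrightarrow> fst p > fst p' \<or> (fst p = fst p' \<and> snd p > snd p')"

definition orblen :: "('x list \<Rightarrow> 'x list) \<Rightarrow> 'x list \<Rightarrow> nat" where
  "orblen h u = (LEAST n. 0 < n \<and> (h ^^ n) u = u)"

definition stabsec :: "(nat \<Rightarrow> 'x set) \<Rightarrow> nat \<Rightarrow> ('x list \<Rightarrow> 'x list) \<Rightarrow> 'x list \<Rightarrow> 'x list \<Rightarrow> 'x list" where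
  "stabsec XS j h u = sectn XS j (h ^^ orblen h u) u"

definition Zset where
  "Zset XS Q G aQ aG ob Y Y' j w = {(s, t) \<in> Y j \<times> Y' j. \<exists>x \<in> XS j. \<exists>\<alpha> \<beta>.
     (\<forall>i\<ge>1. \<alpha> i \<in> Y i) \<and> (\<forall>i\<ge>1. \<beta> i \<in> Y' i) \<and> \<alpha> j = s \<and> \<beta> j = t \<and>
     (let \<gamma> = stabsec XS j (fj XS aQ aG ob j \<alpha> \<beta> w) [x] in
      if lenB w > 1 then glenB XS Q G aQ aG ob (Suc j) \<alpha> \<beta> \<gamma> = lenB w
      else lex_gt (glenB XS Q G aQ aG ob (Suc j) \<alpha> \<beta> \<gamma>, glenA XS Q G aQ aG ob (Suc j) \<alpha> \<beta> \<gamma>) (1, 0))}"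

definition mj where
  "mj XS Q G aQ aG j = Max ((\<lambda>a. group.ord (BijGroup (XS j)) a) ` Agrp XS Q G aQ aG j)"

definition fin_gen :: "('a, 'b) monoid_scheme \<Rightarrow> bool" where
  "fin_gen H \<longleftrightarrow> (\<exists>S. finite S \<and> S \<subseteq> carrier H \<and> generate H S = carrier H)"

end

theory Submission
  imports Defs
begin

lemma words_Nil[simp]: "[] \<in> words XS k"
  by (simp add: words_def)

lemma words_Cons[simp]: "x # v \<in> words XS k \<longleftrightarrow> x \<in> XS k \<and> v \<in> words XS (Suc k)"
proof
  assume "x # v \<in> words XS k"
  then have h: "\<forall>i<Suc (length v). (x#v) ! i \<in> XS (k + i)" by (simp add: words_def)
  from h[rule_format, of 0] have "x \<in> XS k" by simp
  moreover have "v \<in> words XS (Suc k)"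
    unfolding words_def using h by (auto dest: spec[of _ "Suc _"])
  ultimately show "x \<in> XS k \<and> v \<in> words XS (Suc k)" by simp
next
  assume "x \<in> XS k \<and> v \<in> words XS (Suc k)"
  then show "x # v \<in> words XS k"
    unfolding words_def by (auto simp: nth_Cons split: nat.split)
qed

lemma tilde_raw_words:
  assumes "\<forall>n>k. \<forall>y\<in>XS n. act n y \<in> XS n"
    and "u \<in> words XS k"
  shows "tilde_raw ob \<alpha> act k u \<in> words XS k"
  using assms
proof (induction u arbitrary: k)
  case Nil
  then show ?case by simp
next
  case (Cons x v)
  then show ?case
    by (auto split: list.split)
qed

lemma tilde_raw_comp:
  assumes "\<forall>n>k. \<forall>y\<in>XS n. act2 n y \<in> XS n"
    and "\<forall>n>k. \<forall>y\<in>XS n. act12 n y = act1 n (act2 n y)"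
    and "u \<in> words XS k"
  shows "tilde_raw ob \<alpha> act1 k (tilde_raw ob \<alpha> act2 k u) = tilde_raw ob \<alpha> act12 k u"
  using assms
proof (induction u arbitrary: k)
  case Nil
  then show ?case by simp
next
  case (Cons x v)
  then show ?case
    by (auto split: list.split)
qed

lemma tilde_raw_id:
  assumes "\<forall>n>k. \<forall>y\<in>XS n. act n y = y"
    and "u \<in> words XS k"
  shows "tilde_raw ob \<alpha> act k u = u"
  using assms
proof (induction u arbitrary: k)
  case Nil
  then show ?case by simp
next
  case (Cons x v)
  then show ?case
    by (auto split: list.split)
qed

lemma tilde_raw_comm:
  assumes "\<forall>n\<ge>k. \<alpha> n \<noteq> \<beta> n"
    and "u \<in> words XS k"
  shows "tilde_raw ob \<alpha> a1 k (tilde_raw ob \<beta> a2 k u) = tilde_raw ob \<beta> a2 k (tilde_raw ob \<alpha> a1 k u)"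
  using assms
proof (induction u arbitrary: k)
  case Nil
  then show ?case by simp
next
  case (Cons x v)
  then show ?case
    by (auto split: list.split)
qed


definition Lt where
  "Lt XS aQ aG ob k \<alpha> \<beta> l = (case l of
        Inl a \<Rightarrow> liftA XS k a
      | Inr (q, g) \<Rightarrow> tilde XS ob \<alpha> (\<lambda>n. aQ n q) k \<circ> tilde XS ob \<beta> (\<lambda>n. aG n g) k)"

lemma fj_Nil[simp]: "fj XS aQ aG ob k \<alpha> \<beta> [] = id"
  by (simp add: fj_def)

lemma fj_Cons: "fj XS aQ aG ob k \<alpha> \<beta> (l # w) = Lt XS aQ aG ob k \<alpha> \<beta> l \<circ> fj XS aQ aG ob k \<alpha> \<beta> w"
  by (simp add: fj_def Lt_def)

lemma fj_append: "fj XS aQ aG ob k \<alpha> \<beta> (w1 @ w2) = fj XS aQ aG ob k \<alpha> \<beta> w1 \<circ> fj XS aQ aG ob k \<alpha> \<beta> w2"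
  by (induction w1) (auto simp: fj_Cons)

lemma Lt_out: "u \<notin> words XS k \<Longrightarrow> Lt XS aQ aG ob k \<alpha> \<beta> l u = u"
  by (auto simp: Lt_def liftA_def tilde_def extw_def split: sum.split prod.split)

lemma fj_out: "u \<notin> words XS k \<Longrightarrow> fj XS aQ aG ob k \<alpha> \<beta> w u = u"
  by (induction w) (auto simp: fj_Cons Lt_out)

lemma tilde_comp:
  assumes "\<forall>n>k. \<forall>y\<in>XS n. a1 n y \<in> XS n" "\<forall>n>k. \<forall>y\<in>XS n. a2 n y \<in> XS n"
    and "\<forall>n>k. \<forall>y\<in>XS n. a12 n y = a1 n (a2 n y)"
  shows "tilde XS ob \<alpha> a1 k \<circ> tilde XS ob \<alpha> a2 k = tilde XS ob \<alpha> a12 k"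
proof
  fix u
  show "(tilde XS ob \<alpha> a1 k \<circ> tilde XS ob \<alpha> a2 k) u = tilde XS ob \<alpha> a12 k u"
    using tilde_raw_words[OF assms(2)] tilde_raw_comp[OF assms(2,3)]
    by (auto simp: tilde_def extw_def)
qed

lemma tilde_id:
  assumes "\<forall>n>k. \<forall>y\<in>XS n. a n y = y"
  shows "tilde XS ob \<alpha> a k = id"
proof
  fix u
  show "tilde XS ob \<alpha> a k u = id u"
    using tilde_raw_id[OF assms, of u ob \<alpha>] by (auto simp: tilde_def extw_def)
qed

lemma tilde_comm:
  assumes "\<forall>n\<ge>k. \<alpha> n \<noteq> \<beta> n"
    and "\<forall>n>k. \<forall>y\<in>XS n. a1 n y \<in> XS n" "\<forall>n>k. \<forall>y\<in>XS n. a2 n y \<in> XS n"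
  shows "tilde XS ob \<alpha> a1 k \<circ> tilde XS ob \<beta> a2 k = tilde XS ob \<beta> a2 k \<circ> tilde XS ob \<alpha> a1 k"
proof
  fix u
  show "(tilde XS ob \<alpha> a1 k \<circ> tilde XS ob \<beta> a2 k) u = (tilde XS ob \<beta> a2 k \<circ> tilde XS ob \<alpha> a1 k) u"
    using tilde_raw_words[OF assms(2)] tilde_raw_words[OF assms(3)]
      tilde_raw_comm[OF assms(1)]
    by (auto simp: tilde_def extw_def)
qed

lemma lenB_Nil[simp]: "lenB [] = 0" by (simp add: lenB_def)
lemma lenA_Nil[simp]: "lenA [] = 0" by (simp add: lenA_def)
lemma lenB_Cons[simp]: "lenB (l # w) = (if isl l then 0 else 1) + lenB w" by (simp add: lenB_def)
lemma lenA_Cons[simp]: "lenA (l # w) = (if isl l then 1 else 0) + lenA w" by (simp add: lenA_def)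
lemma lenB_append[simp]: "lenB (u @ w) = lenB u + lenB w" by (simp add: lenB_def)
lemma lenA_append[simp]: "lenA (u @ w) = lenA u + lenA w" by (simp add: lenA_def)

locale setting =
  fixes XS :: "nat \<Rightarrow> 'x set" and Q :: "('q, 'a) monoid_scheme" and G :: "('g, 'b) monoid_scheme"
    and aQ :: "nat \<Rightarrow> 'q \<Rightarrow> 'x \<Rightarrow> 'x" and aG :: "nat \<Rightarrow> 'g \<Rightarrow> 'x \<Rightarrow> 'x"
    and ob :: "nat \<Rightarrow> 'x"
  assumes grpQ: "group Q" and grpG: "group G"
    and finX: "\<And>n. n \<ge> 1 \<Longrightarrow> finite (XS n)"
    and actQ: "\<And>n. n \<ge> 1 \<Longrightarrow> group_action Q (XS n) (aQ n)"
    and actG: "\<And>n. n \<ge> 1 \<Longrightarrow> group_action G (XS n) (aG n)"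
    and o_in: "\<And>n. n \<ge> 1 \<Longrightarrow> ob n \<in> XS n"
begin

abbreviation "BG n \<equiv> BijGroup (XS n)"
abbreviation "AG n \<equiv> Agrp XS Q G aQ aG n"

definition valid where
  "valid k l = (case l of Inl a \<Rightarrow> a \<in> AG k | Inr (q, g) \<Rightarrow> q \<in> carrier Q \<and> g \<in> carrier G)"

definition good where
  "good \<alpha> \<beta> = (\<forall>n\<ge>1. \<alpha> n \<noteq> \<beta> n \<and> \<alpha> n \<noteq> ob n \<and> \<beta> n \<noteq> ob n)"

lemma aQ_XS: "n \<ge> 1 \<Longrightarrow> q \<in> carrier Q \<Longrightarrow> y \<in> XS n \<Longrightarrow> aQ n q y \<in> XS n"
  using group_action.element_image[OF actQ] by blast
lemma aG_XS: "n \<ge> 1 \<Longrightarrow> g \<in> carrier G \<Longrightarrow> y \<in> XS n \<Longrightarrow> aG n g y \<in> XS n"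
  using group_action.element_image[OF actG] by blast
lemma aQ_comp: "n \<ge> 1 \<Longrightarrow> q1 \<in> carrier Q \<Longrightarrow> q2 \<in> carrier Q \<Longrightarrow> y \<in> XS n \<Longrightarrow>
   aQ n (q1 \<otimes>\<^bsub>Q\<^esub> q2) y = aQ n q1 (aQ n q2 y)"
  using group_action.composition_rule[OF actQ] by blast
lemma aG_comp: "n \<ge> 1 \<Longrightarrow> q1 \<in> carrier G \<Longrightarrow> q2 \<in> carrier G \<Longrightarrow> y \<in> XS n \<Longrightarrow>
   aG n (q1 \<otimes>\<^bsub>G\<^esub> q2) y = aG n q1 (aG n q2 y)"
  using group_action.composition_rule[OF actG] by blast
lemma aQ_one: "n \<ge> 1 \<Longrightarrow> y \<in> XS n \<Longrightarrow> aQ n \<one>\<^bsub>Q\<^esub> y = y"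
  using group_action.id_eq_one[OF actQ, of n] by (metis restrict_apply')
lemma aG_one: "n \<ge> 1 \<Longrightarrow> y \<in> XS n \<Longrightarrow> aG n \<one>\<^bsub>G\<^esub> y = y"
  using group_action.id_eq_one[OF actG, of n] by (metis restrict_apply')
lemma aQ_Bij: "n \<ge> 1 \<Longrightarrow> q \<in> carrier Q \<Longrightarrow> aQ n q \<in> carrier (BG n)"
  using group_action.bij_prop0[OF actQ] by (simp add: BijGroup_def)
lemma aG_Bij: "n \<ge> 1 \<Longrightarrow> g \<in> carrier G \<Longrightarrow> aG n g \<in> carrier (BG n)"
  using group_action.bij_prop0[OF actG] by (simp add: BijGroup_def)

lemma Agrp_subgroup: "n \<ge> 1 \<Longrightarrow> subgroup (AG n) (BG n)"
  unfolding Agrp_def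
  by (rule group.generate_is_subgroup[OF group_BijGroup]) (auto simp: aQ_Bij aG_Bij)

lemma Agrp_carrier: "n \<ge> 1 \<Longrightarrow> a \<in> AG n \<Longrightarrow> a \<in> Bij (XS n)"
  using subgroup.subset[OF Agrp_subgroup] by (auto simp: BijGroup_def)

lemma Bij_XS: "a \<in> Bij S \<Longrightarrow> y \<in> S \<Longrightarrow> a y \<in> S"
  by (auto simp: Bij_def bij_betw_def)

lemma aQ_Agrp: "n \<ge> 1 \<Longrightarrow> q \<in> carrier Q \<Longrightarrow> aQ n q \<in> AG n"
  unfolding Agrp_def by (auto intro: generate.incl)
lemma aG_Agrp: "n \<ge> 1 \<Longrightarrow> g \<in> carrier G \<Longrightarrow> aG n g \<in> AG n"
  unfolding Agrp_def by (auto intro: generate.incl)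

lemma Lt_words:
  assumes "k \<ge> 1" "valid k l" "u \<in> words XS k"
  shows "Lt XS aQ aG ob k \<alpha> \<beta> l u \<in> words XS k"
proof (cases l)
  case (Inl a)
  then have "a \<in> Bij (XS k)" using assms Agrp_carrier by (simp add: valid_def)
  then show ?thesis using Inl assms(3)
    by (auto simp: Lt_def liftA_def extw_def Bij_XS split: list.split)
next
  case (Inr p)
  then obtain q g where p: "l = Inr (q, g)" by (cases p) auto
  then have qg: "q \<in> carrier Q" "g \<in> carrier G" using assms by (auto simp: valid_def)
  have hq: "\<forall>n>k. \<forall>y\<in>XS n. aQ n q y \<in> XS n" using qg assms(1) aQ_XS by auto
  have hg: "\<forall>n>k. \<forall>y\<in>XS n. aG n g y \<in> XS n" using qg assms(1) aG_XS by auto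
  show ?thesis using p assms(3) tilde_raw_words[OF hq] tilde_raw_words[OF hg]
    by (auto simp: Lt_def tilde_def extw_def)
qed

lemma fj_words:
  assumes "k \<ge> 1" "\<forall>l\<in>set w. valid k l" "u \<in> words XS k"
  shows "fj XS aQ aG ob k \<alpha> \<beta> w u \<in> words XS k"
  using assms by (induction w) (auto simp: fj_Cons Lt_words)

definition sig :: "(('x \<Rightarrow> 'x) + ('q \<times> 'g)) \<Rightarrow> 'x \<Rightarrow> 'x" where
  "sig l x = (case l of Inl a \<Rightarrow> a x | Inr _ \<Rightarrow> x)"

definition tau :: "nat \<Rightarrow> (nat \<Rightarrow> 'x) \<Rightarrow> (nat \<Rightarrow> 'x) \<Rightarrow> (('x \<Rightarrow> 'x) + ('q \<times> 'g)) \<Rightarrow> 'x \<Rightarrow> (('x \<Rightarrow> 'x) + ('q \<times> 'g)) list" where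
  "tau k \<alpha> \<beta> l x = (case l of Inl a \<Rightarrow> []
     | Inr (q, g) \<Rightarrow> if x = ob k then [Inr (q, g)] else if x = \<alpha> k then [Inl (aQ (Suc k) q)]
                   else if x = \<beta> k then [Inl (aG (Suc k) g)] else [])"

lemma tau_valid:
  assumes "k \<ge> 1" "valid k l" "l' \<in> set (tau k \<alpha> \<beta> l x)"
  shows "valid (Suc k) l'"
  using assms by (auto simp: tau_def valid_def aQ_Agrp aG_Agrp split: sum.split prod.split sum.split_asm if_splits)

lemma Lt_Cons:
  assumes k: "k \<ge> 1" and v: "valid k l" and gd: "good \<alpha> \<beta>" and x: "x \<in> XS k"
    and vw: "v \<in> words XS (Suc k)"
  shows "Lt XS aQ aG ob k \<alpha> \<beta> l (x # v) = sig l x # fj XS aQ aG ob (Suc k) \<alpha> \<beta> (tau k \<alpha> \<beta> l x) v"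
proof (cases l)
  case (Inl a)
  then show ?thesis using x vw by (simp add: Lt_def liftA_def extw_def sig_def tau_def)
next
  case (Inr p)
  then obtain q g where p: "l = Inr (q, g)" by (cases p) auto
  then have qg: "q \<in> carrier Q" "g \<in> carrier G" using v by (auto simp: valid_def)
  have hq: "\<forall>n>k. \<forall>y\<in>XS n. aQ n q y \<in> XS n" using qg k aQ_XS by auto
  have hg: "\<forall>n>k. \<forall>y\<in>XS n. aG n g y \<in> XS n" using qg k aG_XS by auto
  have hq': "\<forall>n>Suc k. \<forall>y\<in>XS n. aQ n q y \<in> XS n" using hq by auto
  have hg': "\<forall>n>Suc k. \<forall>y\<in>XS n. aG n g y \<in> XS n" using hg by auto
  have ne: "\<alpha> k \<noteq> \<beta> k" "\<alpha> k \<noteq> ob k" "\<beta> k \<noteq> ob k" using gd k by (auto simp: good_def)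
  have w1: "tilde_raw ob \<beta> (\<lambda>n. aG n g) k (x # v) \<in> words XS k"
    by (rule tilde_raw_words[OF hg]) (simp add: x vw)
  have w2: "tilde_raw ob \<beta> (\<lambda>n. aG n g) (Suc k) v \<in> words XS (Suc k)"
    by (rule tilde_raw_words[OF hg']) (simp add: vw)
  have w3: "(case v of [] \<Rightarrow> [] | y # v' \<Rightarrow> aG (Suc k) g y # v') \<in> words XS (Suc k)"
    using vw hg by (auto split: list.split)
  show ?thesis
    using p x vw ne w1 w2 w3
    by (auto simp: Lt_def tilde_def extw_def sig_def tau_def fj_Cons liftA_def split: list.split)
qed

definition perm :: "(('x \<Rightarrow> 'x) + ('q \<times> 'g)) list \<Rightarrow> 'x \<Rightarrow> 'x" where
  "perm w x = foldr sig w x"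

lemma perm_Nil[simp]: "perm [] x = x" by (simp add: perm_def)
lemma perm_Cons[simp]: "perm (l # w) x = sig l (perm w x)" by (simp add: perm_def)

fun secword :: "nat \<Rightarrow> (nat \<Rightarrow> 'x) \<Rightarrow> (nat \<Rightarrow> 'x) \<Rightarrow> (('x \<Rightarrow> 'x) + ('q \<times> 'g)) list \<Rightarrow> 'x \<Rightarrow> (('x \<Rightarrow> 'x) + ('q \<times> 'g)) list" where
  "secword k \<alpha> \<beta> [] x = []"
| "secword k \<alpha> \<beta> (l # w) x = tau k \<alpha> \<beta> l (perm w x) @ secword k \<alpha> \<beta> w x"

lemma sig_XS: "k \<ge> 1 \<Longrightarrow> valid k l \<Longrightarrow> x \<in> XS k \<Longrightarrow> sig l x \<in> XS k"
  by (auto simp: sig_def valid_def Bij_XS Agrp_carrier split: sum.split)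

lemma perm_XS: "k \<ge> 1 \<Longrightarrow> \<forall>l\<in>set w. valid k l \<Longrightarrow> x \<in> XS k \<Longrightarrow> perm w x \<in> XS k"
  by (induction w) (auto simp: sig_XS)

lemma secword_valid: "k \<ge> 1 \<Longrightarrow> \<forall>l\<in>set w. valid k l \<Longrightarrow> \<forall>l'\<in>set (secword k \<alpha> \<beta> w x). valid (Suc k) l'"
  by (induction w) (auto intro: tau_valid)

lemma fj_Cons_dec:
  assumes k: "k \<ge> 1" and v: "\<forall>l\<in>set w. valid k l" and gd: "good \<alpha> \<beta>" and x: "x \<in> XS k"
    and vw: "v \<in> words XS (Suc k)"
  shows "fj XS aQ aG ob k \<alpha> \<beta> w (x # v) = perm w x # fj XS aQ aG ob (Suc k) \<alpha> \<beta> (secword k \<alpha> \<beta> w x) v"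
  using v
proof (induction w)
  case Nil
  then show ?case by simp
next
  case (Cons l w)
  have "fj XS aQ aG ob k \<alpha> \<beta> (l # w) (x # v) = Lt XS aQ aG ob k \<alpha> \<beta> l (perm w x # fj XS aQ aG ob (Suc k) \<alpha> \<beta> (secword k \<alpha> \<beta> w x) v)"
    using Cons by (simp add: fj_Cons)
  also have "\<dots> = sig l (perm w x) # fj XS aQ aG ob (Suc k) \<alpha> \<beta> (tau k \<alpha> \<beta> l (perm w x)) (fj XS aQ aG ob (Suc k) \<alpha> \<beta> (secword k \<alpha> \<beta> w x) v)"
    apply (rule Lt_Cons[OF k _ gd])
    using Cons.prems k x vw secword_valid[OF k, of w \<alpha> \<beta> x]
    by (auto intro: perm_XS fj_words[of "Suc k"])
  finally show ?case by (simp add: fj_append)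
qed

fun secpow :: "nat \<Rightarrow> (nat \<Rightarrow> 'x) \<Rightarrow> (nat \<Rightarrow> 'x) \<Rightarrow> (('x \<Rightarrow> 'x) + ('q \<times> 'g)) list \<Rightarrow> nat \<Rightarrow> 'x \<Rightarrow> (('x \<Rightarrow> 'x) + ('q \<times> 'g)) list" where
  "secpow k \<alpha> \<beta> w 0 x = []"
| "secpow k \<alpha> \<beta> w (Suc n) x = secword k \<alpha> \<beta> w ((perm w ^^ n) x) @ secpow k \<alpha> \<beta> w n x"

lemma perm_pow_XS: "k \<ge> 1 \<Longrightarrow> \<forall>l\<in>set w. valid k l \<Longrightarrow> x \<in> XS k \<Longrightarrow> (perm w ^^ n) x \<in> XS k"
  by (induction n) (auto intro: perm_XS)

lemma secpow_valid: "k \<ge> 1 \<Longrightarrow> \<forall>l\<in>set w. valid k l \<Longrightarrow> \<forall>l'\<in>set (secpow k \<alpha> \<beta> w n x). valid (Suc k) l'"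
proof (induction n)
  case (Suc n)
  then show ?case using secword_valid[of k w \<alpha> \<beta> "(perm w ^^ n) x"] by auto
qed simp

lemma fj_pow:
  assumes k: "k \<ge> 1" and v: "\<forall>l\<in>set w. valid k l" and gd: "good \<alpha> \<beta>" and x: "x \<in> XS k"
    and vw: "v \<in> words XS (Suc k)"
  shows "(fj XS aQ aG ob k \<alpha> \<beta> w ^^ n) (x # v) = (perm w ^^ n) x # fj XS aQ aG ob (Suc k) \<alpha> \<beta> (secpow k \<alpha> \<beta> w n x) v"
proof (induction n)
  case 0
  then show ?case by simp
next
  case (Suc n)
  have "(fj XS aQ aG ob k \<alpha> \<beta> w ^^ Suc n) (x # v) = fj XS aQ aG ob k \<alpha> \<beta> w ((perm w ^^ n) x # fj XS aQ aG ob (Suc k) \<alpha> \<beta> (secpow k \<alpha> \<beta> w n x) v)"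
    using Suc by simp
  also have "\<dots> = perm w ((perm w ^^ n) x) # fj XS aQ aG ob (Suc k) \<alpha> \<beta> (secword k \<alpha> \<beta> w ((perm w ^^ n) x)) (fj XS aQ aG ob (Suc k) \<alpha> \<beta> (secpow k \<alpha> \<beta> w n x) v)"
    apply (rule fj_Cons_dec[OF k v gd])
    using k v x vw secpow_valid[OF k v, of \<alpha> \<beta> n x]
    by (auto intro: perm_pow_XS fj_words[of "Suc k"])
  finally show ?case by (simp add: fj_append)
qed

lemma Lt_Nil: "Lt XS aQ aG ob k \<alpha> \<beta> l [] = []"
  by (auto simp: Lt_def liftA_def tilde_def extw_def split: sum.split prod.split)

lemma fj_Nil_arg: "fj XS aQ aG ob k \<alpha> \<beta> w [] = []"
  by (induction w) (auto simp: fj_Cons Lt_Nil)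

lemma fj_pow_single:
  assumes k: "k \<ge> 1" and v: "\<forall>l\<in>set w. valid k l" and gd: "good \<alpha> \<beta>" and x: "x \<in> XS k"
  shows "(fj XS aQ aG ob k \<alpha> \<beta> w ^^ n) [x] = [(perm w ^^ n) x]"
  using fj_pow[OF k v gd x words_Nil, of n] by (simp add: fj_Nil_arg)

lemma orblen_eq:
  assumes k: "k \<ge> 1" and v: "\<forall>l\<in>set w. valid k l" and gd: "good \<alpha> \<beta>" and x: "x \<in> XS k"
  shows "orblen (fj XS aQ aG ob k \<alpha> \<beta> w) [x] = (LEAST n. 0 < n \<and> (perm w ^^ n) x = x)"
  unfolding orblen_def fj_pow_single[OF assms] by simp

lemma stabsec_eq:
  assumes k: "k \<ge> 1" and v: "\<forall>l\<in>set w. valid k l" and gd: "good \<alpha> \<beta>" and x: "x \<in> XS k"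
  shows "stabsec XS k (fj XS aQ aG ob k \<alpha> \<beta> w) [x] =
     fj XS aQ aG ob (Suc k) \<alpha> \<beta> (secpow k \<alpha> \<beta> w (orblen (fj XS aQ aG ob k \<alpha> \<beta> w) [x]) x)"
proof
  fix u
  show "stabsec XS k (fj XS aQ aG ob k \<alpha> \<beta> w) [x] u =
     fj XS aQ aG ob (Suc k) \<alpha> \<beta> (secpow k \<alpha> \<beta> w (orblen (fj XS aQ aG ob k \<alpha> \<beta> w) [x]) x) u"
  proof (cases "u \<in> words XS (Suc k)")
    case True
    then show ?thesis
      unfolding stabsec_def sectn_def using fj_pow[OF k v gd x True] by simp
  next
    case False
    then show ?thesis
      unfolding stabsec_def sectn_def by (simp add: fj_out)
  qed
qed

definition piw :: "nat \<Rightarrow> (('x \<Rightarrow> 'x) + ('q \<times> 'g)) list \<Rightarrow> 'x \<Rightarrow> 'x" where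
  "piw k w = foldr (\<lambda>l p. case l of Inl a \<Rightarrow> a \<otimes>\<^bsub>BG k\<^esub> p | Inr _ \<Rightarrow> p) w \<one>\<^bsub>BG k\<^esub>"

lemma piw_Nil[simp]: "piw k [] = \<one>\<^bsub>BG k\<^esub>" by (simp add: piw_def)
lemma piw_Cons: "piw k (l # w) = (case l of Inl a \<Rightarrow> a \<otimes>\<^bsub>BG k\<^esub> piw k w | Inr _ \<Rightarrow> piw k w)"
  by (unfold piw_def) simp

lemma piw_Agrp: "k \<ge> 1 \<Longrightarrow> \<forall>l\<in>set w. valid k l \<Longrightarrow> piw k w \<in> AG k"
proof (induction w)
  case Nil
  then show ?case using subgroup.one_closed[OF Agrp_subgroup] by simp
next
  case (Cons l w)
  then show ?case using subgroup.m_closed[OF Agrp_subgroup]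
    by (auto simp: piw_Cons valid_def split: sum.split)
qed

lemma BG_mult_apply: "a \<in> Bij S \<Longrightarrow> b \<in> Bij S \<Longrightarrow> y \<in> S \<Longrightarrow> (a \<otimes>\<^bsub>BijGroup S\<^esub> b) y = a (b y)"
  by (simp add: BijGroup_def compose_def)

lemma BG_one_apply: "y \<in> S \<Longrightarrow> \<one>\<^bsub>BijGroup S\<^esub> y = y"
  by (simp add: BijGroup_def)

lemma perm_piw: "k \<ge> 1 \<Longrightarrow> \<forall>l\<in>set w. valid k l \<Longrightarrow> y \<in> XS k \<Longrightarrow> perm w y = piw k w y"
proof (induction w)
  case Nil
  then show ?case by (simp add: BG_one_apply)
next
  case (Cons l w)
  have pw: "piw k w \<in> Bij (XS k)" using piw_Agrp Agrp_carrier Cons.prems by simp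
  show ?case
  proof (cases l)
    case (Inl a)
    then have "a \<in> Bij (XS k)" using Cons.prems Agrp_carrier by (auto simp: valid_def)
    then show ?thesis using Inl Cons pw by (simp add: piw_Cons sig_def BG_mult_apply)
  next
    case (Inr b)
    then show ?thesis using Cons by (simp add: piw_Cons sig_def)
  qed
qed

lemma finite_BG: "k \<ge> 1 \<Longrightarrow> finite (carrier (BG k))"
proof -
  assume k: "k \<ge> 1"
  have "carrier (BG k) \<subseteq> XS k \<rightarrow>\<^sub>E XS k"
    by (auto simp: BijGroup_def Bij_def bij_betw_def PiE_def extensional_def)
  moreover have "finite (XS k \<rightarrow>\<^sub>E XS k)" using finX[OF k] by (simp add: finite_PiE)
  ultimately show ?thesis by (rule finite_subset)
qed

lemma carrier_BG: "carrier (BijGroup S) = Bij S" by (simp add: BijGroup_def)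

lemma BG_pow_apply:
  assumes "p \<in> Bij S" "y \<in> S"
  shows "(p [^]\<^bsub>BijGroup S\<^esub> (n::nat)) y = (p ^^ n) y"
  using assms(2)
proof (induction n arbitrary: y)
  case 0
  then show ?case by (simp add: BG_one_apply)
next
  case (Suc n)
  interpret grp: group "BijGroup S" by (rule group_BijGroup)
  have pc: "p \<in> carrier (BijGroup S)" using assms by (simp add: BijGroup_def)
  have pn: "p [^]\<^bsub>BijGroup S\<^esub> n \<in> Bij S"
    using grp.nat_pow_closed[OF pc, of n] by (simp only: carrier_BG)
  have py: "p y \<in> S" by (rule Bij_XS[OF assms(1) Suc.prems])
  have "(p [^]\<^bsub>BijGroup S\<^esub> Suc n) y = (p [^]\<^bsub>BijGroup S\<^esub> n \<otimes>\<^bsub>BijGroup S\<^esub> p) y"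
    by (simp only: grp.nat_pow_Suc)
  also have "\<dots> = (p [^]\<^bsub>BijGroup S\<^esub> n) (p y)"
    by (rule BG_mult_apply[OF pn assms(1) Suc.prems])
  also have "\<dots> = (p ^^ n) (p y)" by (rule Suc.IH[OF py])
  finally show ?case by (metis comp_apply funpow_Suc_right)
qed

definition nontriv where
  "nontriv k l = (case l of Inl a \<Rightarrow> a \<in> AG k \<and> a \<noteq> \<one>\<^bsub>BG k\<^esub>
       | Inr (q, g) \<Rightarrow> q \<in> carrier Q \<and> g \<in> carrier G \<and> (q, g) \<noteq> (\<one>\<^bsub>Q\<^esub>, \<one>\<^bsub>G\<^esub>))"

lemma Fj_Nil: "[] \<in> Fj XS Q G aQ aG k"
  by (simp add: Fj_def)

lemma Fj_Cons: "l # w \<in> Fj XS Q G aQ aG k \<longleftrightarrow>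
    nontriv k l \<and> w \<in> Fj XS Q G aQ aG k \<and> (w \<noteq> [] \<longrightarrow> isl l \<noteq> isl (hd w))"
proof -
  have alt: "(\<forall>i. Suc i < length (l # w) \<longrightarrow> isl ((l # w) ! i) \<noteq> isl ((l # w) ! Suc i)) \<longleftrightarrow>
     (\<forall>i. Suc i < length w \<longrightarrow> isl (w ! i) \<noteq> isl (w ! Suc i)) \<and> (w \<noteq> [] \<longrightarrow> isl l \<noteq> isl (hd w))"
  proof
    assume h: "\<forall>i. Suc i < length (l # w) \<longrightarrow> isl ((l # w) ! i) \<noteq> isl ((l # w) ! Suc i)"
    have "\<forall>i. Suc i < length w \<longrightarrow> isl (w ! i) \<noteq> isl (w ! Suc i)"
    proof (intro allI impI)
      fix i assume "Suc i < length w"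
      then show "isl (w ! i) \<noteq> isl (w ! Suc i)" using h[rule_format, of "Suc i"] by simp
    qed
    moreover have "w \<noteq> [] \<longrightarrow> isl l \<noteq> isl (hd w)"
      using h[rule_format, of 0] by (cases w) auto
    ultimately show "(\<forall>i. Suc i < length w \<longrightarrow> isl (w ! i) \<noteq> isl (w ! Suc i)) \<and> (w \<noteq> [] \<longrightarrow> isl l \<noteq> isl (hd w))" by blast
  next
    assume h: "(\<forall>i. Suc i < length w \<longrightarrow> isl (w ! i) \<noteq> isl (w ! Suc i)) \<and> (w \<noteq> [] \<longrightarrow> isl l \<noteq> isl (hd w))"
    show "\<forall>i. Suc i < length (l # w) \<longrightarrow> isl ((l # w) ! i) \<noteq> isl ((l # w) ! Suc i)"
    proof (intro allI impI)
      fix i assume i: "Suc i < length (l # w)"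
      show "isl ((l # w) ! i) \<noteq> isl ((l # w) ! Suc i)"
      proof (cases i)
        case 0
        then show ?thesis using h i by (cases w) auto
      next
        case (Suc i')
        then show ?thesis using h i by auto
      qed
    qed
  qed
  show ?thesis unfolding Fj_def mem_Collect_eq alt
    by (auto simp: nontriv_def split: sum.split prod.split)
qed

lemma nontriv_valid: "nontriv k l \<Longrightarrow> valid k l"
  by (auto simp: nontriv_def valid_def split: sum.splits prod.splits)

definition lmult where
  "lmult k l1 l2 = (case (l1, l2) of (Inl a, Inl b) \<Rightarrow> Inl (a \<otimes>\<^bsub>BG k\<^esub> b)
     | (Inr (q1, g1), Inr (q2, g2)) \<Rightarrow> Inr (q1 \<otimes>\<^bsub>Q\<^esub> q2, g1 \<otimes>\<^bsub>G\<^esub> g2)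
     | _ \<Rightarrow> l1)"

lemma lmult_valid: "k \<ge> 1 \<Longrightarrow> valid k l1 \<Longrightarrow> valid k l2 \<Longrightarrow> isl l1 = isl l2 \<Longrightarrow>
   valid k (lmult k l1 l2) \<and> isl (lmult k l1 l2) = isl l1"
  using subgroup.m_closed[OF Agrp_subgroup] group.subgroup_self[OF grpQ] group.subgroup_self[OF grpG]
  by (auto simp: lmult_def valid_def split: sum.splits prod.splits intro: subgroup.m_closed)

lemma Lt_trivial:
  assumes k: "k \<ge> 1" and v: "valid k l" and nt: "\<not> nontriv k l"
  shows "Lt XS aQ aG ob k \<alpha> \<beta> l = id"
proof (cases l)
  case (Inl a)
  then have a: "a = \<one>\<^bsub>BG k\<^esub>" using v nt by (auto simp: valid_def nontriv_def)
  show ?thesis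
  proof
    fix u show "Lt XS aQ aG ob k \<alpha> \<beta> l u = id u"
      using Inl a by (auto simp: Lt_def liftA_def extw_def BG_one_apply split: list.split)
  qed
next
  case (Inr p)
  then obtain q g where p: "l = Inr (q, g)" by (cases p) auto
  then have qg: "q = \<one>\<^bsub>Q\<^esub>" "g = \<one>\<^bsub>G\<^esub>" using v nt by (auto simp: valid_def nontriv_def)
  have "tilde XS ob \<alpha> (\<lambda>n. aQ n q) k = id"
    by (rule tilde_id) (use k qg aQ_one in auto)
  moreover have "tilde XS ob \<beta> (\<lambda>n. aG n g) k = id"
    by (rule tilde_id) (use k qg aG_one in auto)
  ultimately show ?thesis using p by (simp add: Lt_def)
qed

lemma Lt_lmult:
  assumes k: "k \<ge> 1" and v1: "valid k l1" and v2: "valid k l2" and same: "isl l1 = isl l2"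
    and gd: "good \<alpha> \<beta>"
  shows "Lt XS aQ aG ob k \<alpha> \<beta> l1 \<circ> Lt XS aQ aG ob k \<alpha> \<beta> l2 = Lt XS aQ aG ob k \<alpha> \<beta> (lmult k l1 l2)"
proof (cases l1)
  case (Inl a)
  then obtain b where b: "l2 = Inl b" using same by (cases l2) auto
  have ab: "a \<in> Bij (XS k)" "b \<in> Bij (XS k)" using Inl b v1 v2 Agrp_carrier k by (auto simp: valid_def)
  show ?thesis
  proof
    fix u
    show "(Lt XS aQ aG ob k \<alpha> \<beta> l1 \<circ> Lt XS aQ aG ob k \<alpha> \<beta> l2) u = Lt XS aQ aG ob k \<alpha> \<beta> (lmult k l1 l2) u"
      using Inl b ab by (auto simp: Lt_def liftA_def extw_def lmult_def BG_mult_apply Bij_XS split: list.split)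
  qed
next
  case (Inr p1)
  then obtain q1 g1 where p1: "l1 = Inr (q1, g1)" by (cases p1) auto
  then obtain q2 g2 where p2: "l2 = Inr (q2, g2)" using same by (cases l2) auto
  have c: "q1 \<in> carrier Q" "g1 \<in> carrier G" "q2 \<in> carrier Q" "g2 \<in> carrier G"
    using p1 p2 v1 v2 by (auto simp: valid_def)
  have ne: "\<forall>n\<ge>k. \<alpha> n \<noteq> \<beta> n" using gd k by (auto simp: good_def)
  have comm: "tilde XS ob \<beta> (\<lambda>n. aG n g1) k \<circ> tilde XS ob \<alpha> (\<lambda>n. aQ n q2) k =
     tilde XS ob \<alpha> (\<lambda>n. aQ n q2) k \<circ> tilde XS ob \<beta> (\<lambda>n. aG n g1) k"
    by (rule sym, rule tilde_comm[OF ne]) (use k c aQ_XS aG_XS in auto)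
  have cq: "tilde XS ob \<alpha> (\<lambda>n. aQ n q1) k \<circ> tilde XS ob \<alpha> (\<lambda>n. aQ n q2) k =
      tilde XS ob \<alpha> (\<lambda>n. aQ n (q1 \<otimes>\<^bsub>Q\<^esub> q2)) k"
    by (rule tilde_comp) (use k c aQ_XS aQ_comp in auto)
  have cg: "tilde XS ob \<beta> (\<lambda>n. aG n g1) k \<circ> tilde XS ob \<beta> (\<lambda>n. aG n g2) k =
      tilde XS ob \<beta> (\<lambda>n. aG n (g1 \<otimes>\<^bsub>G\<^esub> g2)) k"
    by (rule tilde_comp) (use k c aG_XS aG_comp in auto)
  have "Lt XS aQ aG ob k \<alpha> \<beta> l1 \<circ> Lt XS aQ aG ob k \<alpha> \<beta> l2 =
     tilde XS ob \<alpha> (\<lambda>n. aQ n q1) k \<circ> (tilde XS ob \<beta> (\<lambda>n. aG n g1) k \<circ> tilde XS ob \<alpha> (\<lambda>n. aQ n q2) k) \<circ> tilde XS ob \<beta> (\<lambda>n. aG n g2) k"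
    using p1 p2 by (simp add: Lt_def o_assoc)
  also have "\<dots> = (tilde XS ob \<alpha> (\<lambda>n. aQ n q1) k \<circ> tilde XS ob \<alpha> (\<lambda>n. aQ n q2) k) \<circ> (tilde XS ob \<beta> (\<lambda>n. aG n g1) k \<circ> tilde XS ob \<beta> (\<lambda>n. aG n g2) k)"
    by (simp only: comm o_assoc)
  also have "\<dots> = Lt XS aQ aG ob k \<alpha> \<beta> (lmult k l1 l2)"
    using p1 p2 by (simp only: cq cg) (simp add: Lt_def lmult_def)
  finally show ?thesis .
qed

lemma normalize:
  assumes k: "k \<ge> 1" and gd: "good \<alpha> \<beta>"
  shows "\<forall>l\<in>set r. valid k l \<Longrightarrow> \<exists>w'\<in>Fj XS Q G aQ aG k. fj XS aQ aG ob k \<alpha> \<beta> w' = fj XS aQ aG ob k \<alpha> \<beta> r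
     \<and> lenB w' \<le> lenB r \<and> lenA w' \<le> lenA r"
proof (induction r)
  case Nil
  then show ?case using Fj_Nil by fastforce
next
  case (Cons l r)
  then obtain w' where w': "w' \<in> Fj XS Q G aQ aG k" "fj XS aQ aG ob k \<alpha> \<beta> w' = fj XS aQ aG ob k \<alpha> \<beta> r"
    "lenB w' \<le> lenB r" "lenA w' \<le> lenA r" by auto
  have vl: "valid k l" using Cons.prems by simp
  show ?case
  proof (cases "nontriv k l")
    case False
    then have "fj XS aQ aG ob k \<alpha> \<beta> (l # r) = fj XS aQ aG ob k \<alpha> \<beta> w'"
      using Lt_trivial[OF k vl False] w' by (simp add: fj_Cons)
    then show ?thesis using w' by (intro bexI[of _ w']) auto
  next
    case True
    show ?thesis
    proof (cases "w' = [] \<or> isl l \<noteq> isl (hd w')")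
      case True2: True
      then have "l # w' \<in> Fj XS Q G aQ aG k" using w' True by (auto simp: Fj_Cons)
      then show ?thesis using w' by (intro bexI[of _ "l # w'"]) (auto simp: fj_Cons)
    next
      case False
      then obtain l' w'' where ww: "w' = l' # w''" and same: "isl l = isl l'" by (cases w') auto
      have l'w: "nontriv k l'" "w'' \<in> Fj XS Q G aQ aG k" "w'' \<noteq> [] \<longrightarrow> isl l' \<noteq> isl (hd w'')"
        using w'(1) ww by (auto simp: Fj_Cons)
      have vl': "valid k l'" using l'w nontriv_valid by blast
      define m where "m = lmult k l l'"
      have vm: "valid k m" "isl m = isl l" using lmult_valid[OF k vl vl' same] m_def by auto
      have "fj XS aQ aG ob k \<alpha> \<beta> (l # r) = Lt XS aQ aG ob k \<alpha> \<beta> l \<circ> (Lt XS aQ aG ob k \<alpha> \<beta> l' \<circ> fj XS aQ aG ob k \<alpha> \<beta> w'')"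
        using w'(2) ww by (simp add: fj_Cons)
      also have "\<dots> = (Lt XS aQ aG ob k \<alpha> \<beta> l \<circ> Lt XS aQ aG ob k \<alpha> \<beta> l') \<circ> fj XS aQ aG ob k \<alpha> \<beta> w''"
        by (simp add: o_assoc)
      finally have fm: "fj XS aQ aG ob k \<alpha> \<beta> (l # r) = Lt XS aQ aG ob k \<alpha> \<beta> m \<circ> fj XS aQ aG ob k \<alpha> \<beta> w''"
        using Lt_lmult[OF k vl vl' same gd] by (simp add: m_def)
      show ?thesis
      proof (cases "nontriv k m")
        case False
        then have "fj XS aQ aG ob k \<alpha> \<beta> (l # r) = fj XS aQ aG ob k \<alpha> \<beta> w''"
          using fm Lt_trivial[OF k vm(1) False] by simp
        then show ?thesis using w' ww l'w by (intro bexI[of _ w'']) (auto split: if_splits)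
      next
        case True
        then have "m # w'' \<in> Fj XS Q G aQ aG k" using l'w vm same by (auto simp: Fj_Cons)
        moreover have "fj XS aQ aG ob k \<alpha> \<beta> (m # w'') = fj XS aQ aG ob k \<alpha> \<beta> (l # r)"
          using fm by (simp add: fj_Cons)
        ultimately show ?thesis using w' ww vm same by (intro bexI[of _ "m # w''"]) (auto split: if_splits)
      qed
    qed
  qed
qed

lemma glenB_le:
  assumes "w' \<in> Fj XS Q G aQ aG k" "fj XS aQ aG ob k \<alpha> \<beta> w' = \<gamma>"
  shows "glenB XS Q G aQ aG ob k \<alpha> \<beta> \<gamma> \<le> lenB w'"
  unfolding glenB_def by (rule Least_le) (use assms in blast)

lemma glenA_le:
  assumes "w' \<in> Fj XS Q G aQ aG k" "fj XS aQ aG ob k \<alpha> \<beta> w' = \<gamma>"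
    and "lenB w' = glenB XS Q G aQ aG ob k \<alpha> \<beta> \<gamma>"
  shows "glenA XS Q G aQ aG ob k \<alpha> \<beta> \<gamma> \<le> lenA w'"
  unfolding glenA_def by (rule Least_le) (use assms in blast)

lemma Fj_noA:
  assumes "w' \<in> Fj XS Q G aQ aG k" "lenA w' = 0"
  shows "lenB w' \<le> 1"
proof -
  have noisl: "\<forall>l\<in>set w'. \<not> isl l" using assms(2) by (simp add: lenA_def filter_empty_conv)
  then have lb: "lenB w' = length w'" by (simp add: lenB_def)
  show ?thesis
  proof (rule ccontr)
    assume "\<not> lenB w' \<le> 1"
    then have "Suc 0 < length w'" using lb by simp
    then have "isl (w' ! 0) \<noteq> isl (w' ! Suc 0)" using assms(1) by (auto simp: Fj_def)
    moreover have "w' ! 0 \<in> set w'"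
      by (rule nth_mem) (use \<open>Suc 0 < length w'\<close> in linarith)
    moreover have "w' ! Suc 0 \<in> set w'"
      by (rule nth_mem) (use \<open>Suc 0 < length w'\<close> in simp)
    ultimately show False using noisl by auto
  qed
qed

lemma sec_bounds:
  assumes k: "k \<ge> 1" and gd: "good \<alpha> \<beta>" and v: "\<forall>l\<in>set r. valid k l"
  shows "glenB XS Q G aQ aG ob k \<alpha> \<beta> (fj XS aQ aG ob k \<alpha> \<beta> r) \<le> lenB r"
    and "lenA r = 0 \<Longrightarrow> glenB XS Q G aQ aG ob k \<alpha> \<beta> (fj XS aQ aG ob k \<alpha> \<beta> r) \<le> 1 \<and>
         \<not> lex_gt (glenB XS Q G aQ aG ob k \<alpha> \<beta> (fj XS aQ aG ob k \<alpha> \<beta> r),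
                    glenA XS Q G aQ aG ob k \<alpha> \<beta> (fj XS aQ aG ob k \<alpha> \<beta> r)) (1, 0)"
proof -
  obtain w' where w': "w' \<in> Fj XS Q G aQ aG k" "fj XS aQ aG ob k \<alpha> \<beta> w' = fj XS aQ aG ob k \<alpha> \<beta> r"
    "lenB w' \<le> lenB r" "lenA w' \<le> lenA r" using normalize[OF k gd v] by blast
  have gb: "glenB XS Q G aQ aG ob k \<alpha> \<beta> (fj XS aQ aG ob k \<alpha> \<beta> r) \<le> lenB w'"
    by (rule glenB_le[OF w'(1,2)])
  then show "glenB XS Q G aQ aG ob k \<alpha> \<beta> (fj XS aQ aG ob k \<alpha> \<beta> r) \<le> lenB r" using w'(3) by simp
  assume a0: "lenA r = 0"
  then have la: "lenA w' = 0" using w'(4) by simp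
  have lb: "lenB w' \<le> 1" by (rule Fj_noA[OF w'(1) la])
  show "glenB XS Q G aQ aG ob k \<alpha> \<beta> (fj XS aQ aG ob k \<alpha> \<beta> r) \<le> 1 \<and>
         \<not> lex_gt (glenB XS Q G aQ aG ob k \<alpha> \<beta> (fj XS aQ aG ob k \<alpha> \<beta> r),
                    glenA XS Q G aQ aG ob k \<alpha> \<beta> (fj XS aQ aG ob k \<alpha> \<beta> r)) (1, 0)"
  proof (cases "glenB XS Q G aQ aG ob k \<alpha> \<beta> (fj XS aQ aG ob k \<alpha> \<beta> r) = 1")
    case True
    then have "lenB w' = glenB XS Q G aQ aG ob k \<alpha> \<beta> (fj XS aQ aG ob k \<alpha> \<beta> r)" using gb lb by simp
    then have "glenA XS Q G aQ aG ob k \<alpha> \<beta> (fj XS aQ aG ob k \<alpha> \<beta> r) \<le> 0"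
      using glenA_le[OF w'(1,2)] la by simp
    then show ?thesis using True by (simp add: lex_gt_def)
  next
    case False
    then show ?thesis using gb lb by (simp add: lex_gt_def)
  qed
qed

lemma lenB_tau: "good \<alpha> \<beta> \<Longrightarrow> k \<ge> 1 \<Longrightarrow>
   lenB (tau k \<alpha> \<beta> l y) = (if \<not> isl l \<and> y = ob k then 1 else 0)"
  by (auto simp: tau_def good_def split: sum.split prod.split)

lemma lenA_tau: "good \<alpha> \<beta> \<Longrightarrow> k \<ge> 1 \<Longrightarrow>
   lenA (tau k \<alpha> \<beta> l y) = (if \<not> isl l \<and> (y = \<alpha> k \<or> y = \<beta> k) then 1 else 0)"
  by (auto simp: tau_def good_def split: sum.split prod.split)

lemma upt_Suc_map: "[0..<Suc n] = 0 # map Suc [0..<n]"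
  by (simp add: map_Suc_upt upt_conv_Cons del: upt_Suc)

lemma secword_lenB:
  assumes "good \<alpha> \<beta>" "k \<ge> 1"
  shows "lenB (secword k \<alpha> \<beta> w y) =
    length (filter (\<lambda>i. \<not> isl (w ! i) \<and> perm (drop (Suc i) w) y = ob k) [0..<length w])"
proof (induction w)
  case Nil
  then show ?case by simp
next
  case (Cons l w)
  show ?case
    unfolding secword.simps lenB_append lenB_tau[OF assms] Cons.IH length_Cons upt_Suc_map
    by (simp add: o_def)
qed

lemma secword_lenA:
  assumes "good \<alpha> \<beta>" "k \<ge> 1"
  shows "lenA (secword k \<alpha> \<beta> w y) =
    length (filter (\<lambda>i. \<not> isl (w ! i) \<and> (perm (drop (Suc i) w) y = \<alpha> k \<or> perm (drop (Suc i) w) y = \<beta> k)) [0..<length w])"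
proof (induction w)
  case Nil
  then show ?case by simp
next
  case (Cons l w)
  show ?case
    unfolding secword.simps lenA_append lenA_tau[OF assms] Cons.IH length_Cons upt_Suc_map
    by (simp add: o_def)
qed

lemma length_filter_upt: "length (filter p [0..<n]) = card {i. i < n \<and> p i}"
  by (simp add: length_filter_conv_card cong: conj_cong)

lemma secpow_lenB: "lenB (secpow k \<alpha> \<beta> w n x) = (\<Sum>m<n. lenB (secword k \<alpha> \<beta> w ((perm w ^^ m) x)))"
  by (induction n) auto

lemma secpow_lenA: "lenA (secpow k \<alpha> \<beta> w n x) = (\<Sum>m<n. lenA (secword k \<alpha> \<beta> w ((perm w ^^ m) x)))"
  by (induction n) auto

lemma perm_pow_piw:
  assumes k: "k \<ge> 1" and v: "\<forall>l\<in>set w. valid k l" and y: "y \<in> XS k"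
  shows "(perm w ^^ n) y = (piw k w [^]\<^bsub>BG k\<^esub> n) y"
proof -
  have pb: "piw k w \<in> Bij (XS k)" using piw_Agrp[OF k v] Agrp_carrier k by blast
  have "(perm w ^^ n) y = (piw k w ^^ n) y"
    using y
  proof (induction n arbitrary: y)
    case (Suc n)
    have "(perm w ^^ Suc n) y = (perm w ^^ n) (perm w y)" by (metis comp_apply funpow_Suc_right)
    also have "\<dots> = (piw k w ^^ n) (piw k w y)"
      using Suc perm_piw[OF k v] perm_XS[OF k v] by simp
    finally show ?case by (metis comp_apply funpow_Suc_right)
  qed simp
  then show ?thesis using BG_pow_apply[OF pb y] by simp
qed

lemma inj_perm: "k \<ge> 1 \<Longrightarrow> \<forall>l\<in>set w. valid k l \<Longrightarrow> inj_on (perm w) (XS k)"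
proof -
  assume k: "k \<ge> 1" and v: "\<forall>l\<in>set w. valid k l"
  have pb: "piw k w \<in> Bij (XS k)" by (rule Agrp_carrier[OF k piw_Agrp[OF k v]])
  then have "bij_betw (piw k w) (XS k) (XS k)" by (simp add: Bij_def)
  then have "inj_on (piw k w) (XS k)" by (rule bij_betw_imp_inj_on)
  moreover have "inj_on (perm w) (XS k) = inj_on (piw k w) (XS k)"
    by (rule inj_on_cong) (rule perm_piw[OF k v])
  ultimately show ?thesis by simp
qed

lemma surj_perm: "k \<ge> 1 \<Longrightarrow> \<forall>l\<in>set w. valid k l \<Longrightarrow> z \<in> XS k \<Longrightarrow> \<exists>y\<in>XS k. perm w y = z"
proof -
  assume k: "k \<ge> 1" and v: "\<forall>l\<in>set w. valid k l" and z: "z \<in> XS k"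
  have pb: "piw k w \<in> Bij (XS k)" by (rule Agrp_carrier[OF k piw_Agrp[OF k v]])
  then have "bij_betw (piw k w) (XS k) (XS k)" by (simp add: Bij_def)
  then have "piw k w ` XS k = XS k" by (rule bij_betw_imp_surj_on)
  then have "z \<in> piw k w ` XS k" using z by simp
  then obtain y where y: "y \<in> XS k" "z = piw k w y" by (rule imageE)
  have "perm w y = z" using perm_piw[OF k v y(1)] y(2) by simp
  then show ?thesis using y(1) by blast
qed

lemma inj_perm_pow: "k \<ge> 1 \<Longrightarrow> \<forall>l\<in>set w. valid k l \<Longrightarrow> inj_on (perm w ^^ n) (XS k)"
proof (induction n)
  case 0
  then show ?case by simp
next
  case (Suc n)
  have sub: "perm w ` XS k \<subseteq> XS k" using perm_XS[OF Suc.prems] by blast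
  have "inj_on (perm w ^^ n \<circ> perm w) (XS k)"
    by (rule comp_inj_on[OF inj_perm[OF Suc.prems]], rule inj_on_subset[OF Suc.IH[OF Suc.prems] sub])
  then show ?case by (simp only: funpow_Suc_right)
qed

definition ordw where "ordw k w = group.ord (BG k) (piw k w)"

lemma ordw_props:
  assumes k: "k \<ge> 1" and v: "\<forall>l\<in>set w. valid k l"
  shows "1 \<le> ordw k w" "ordw k w \<le> mj XS Q G aQ aG k"
    "\<And>y. y \<in> XS k \<Longrightarrow> (perm w ^^ ordw k w) y = y"
proof -
  interpret grp: group "BG k" by (rule group_BijGroup)
  have pa: "piw k w \<in> AG k" by (rule piw_Agrp[OF k v])
  have pc: "piw k w \<in> carrier (BG k)" using pa Agrp_carrier k by (simp add: carrier_BG)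
  show "1 \<le> ordw k w" unfolding ordw_def by (rule grp.ord_ge_1[OF finite_BG[OF k] pc])
  have fa: "finite (AG k)"
    using finite_BG[OF k] Agrp_carrier[OF k] by (metis carrier_BG finite_subset subsetI)
  show "ordw k w \<le> mj XS Q G aQ aG k" unfolding ordw_def mj_def
    by (rule Max_ge) (use fa pa in auto)
  fix y assume y: "y \<in> XS k"
  show "(perm w ^^ ordw k w) y = y"
    unfolding perm_pow_piw[OF k v y] ordw_def grp.pow_ord_eq_1[OF pc] using y by (simp add: BG_one_apply)
qed

lemma perm_pow_mult:
  assumes "\<And>y. y \<in> S \<Longrightarrow> (f ^^ m) y = y" "\<And>y. y \<in> S \<Longrightarrow> f y \<in> S" "y \<in> S"
  shows "(f ^^ (m * q)) y = y"
proof (induction q)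
  case 0
  then show ?case by simp
next
  case (Suc q)
  have "(f ^^ (m * Suc q)) y = (f ^^ m) ((f ^^ (m * q)) y)"
    by (simp add: funpow_add mult.commute)
  then show ?case using Suc assms by simp
qed

lemma perm_pow_mod:
  assumes "\<And>y. y \<in> S \<Longrightarrow> (f ^^ m) y = y" "\<And>y. y \<in> S \<Longrightarrow> f y \<in> S" "y \<in> S"
  shows "(f ^^ n) y = (f ^^ (n mod m)) y"
proof -
  have "(f ^^ n) y = (f ^^ (n mod m + m * (n div m))) y" by (simp only: mod_mult_div_eq)
  also have "\<dots> = (f ^^ (n mod m)) ((f ^^ (m * (n div m))) y)" by (simp only: funpow_add comp_apply)
  also have "\<dots> = (f ^^ (n mod m)) y"
    by (simp only: perm_pow_mult[OF assms(1,2) assms(3), of "n div m"])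
  finally show ?thesis .
qed

lemma card_P: "lenB w = card {i. i < length w \<and> \<not> isl (w ! i)}"
  by (simp add: lenB_def length_filter_conv_card)

lemma lenB_secword_card: "good \<alpha> \<beta> \<Longrightarrow> k \<ge> 1 \<Longrightarrow>
  lenB (secword k \<alpha> \<beta> w y) = card {i. i < length w \<and> \<not> isl (w ! i) \<and> perm (drop (Suc i) w) y = ob k}"
  by (simp add: secword_lenB length_filter_upt conj_assoc)

lemma lenA_secword_pos: "good \<alpha> \<beta> \<Longrightarrow> k \<ge> 1 \<Longrightarrow> lenA (secword k \<alpha> \<beta> w y) > 0 \<Longrightarrow>
  \<exists>i. i < length w \<and> \<not> isl (w ! i) \<and> (perm (drop (Suc i) w) y = \<alpha> k \<or> perm (drop (Suc i) w) y = \<beta> k)"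
proof -
  assume g: "good \<alpha> \<beta>" and k: "k \<ge> 1" and p: "lenA (secword k \<alpha> \<beta> w y) > 0"
  let ?p = "\<lambda>i. \<not> isl (w ! i) \<and> (perm (drop (Suc i) w) y = \<alpha> k \<or> perm (drop (Suc i) w) y = \<beta> k)"
  have "filter ?p [0..<length w] \<noteq> []" using p secword_lenA[OF g k, of w y] by auto
  then obtain i where "i \<in> set [0..<length w]" "?p i" by (auto simp: filter_empty_conv)
  then show ?thesis by auto
qed

lemma orbit_distinct_lt:
  assumes k: "k \<ge> 1" and v: "\<forall>l\<in>set w. valid k l" and x: "x \<in> XS k"
    and nr: "\<forall>n. 0 < n \<and> n < L \<longrightarrow> (perm w ^^ n) x \<noteq> x"
    and mm: "m < m'" "m' < L" and eq: "(perm w ^^ m) x = (perm w ^^ m') x"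
  shows False
proof -
  have "(perm w ^^ m') x = (perm w ^^ (m + (m' - m))) x" using mm by simp
  also have "\<dots> = (perm w ^^ m) ((perm w ^^ (m' - m)) x)" by (simp only: funpow_add comp_apply)
  finally have "(perm w ^^ m) x = (perm w ^^ m) ((perm w ^^ (m' - m)) x)" using eq by simp
  then have "x = (perm w ^^ (m' - m)) x"
    using inj_perm_pow[OF k v, of m] x perm_pow_XS[OF k v x, of "m' - m"] by (auto dest: inj_onD)
  moreover have "0 < m' - m \<and> m' - m < L" using mm by simp
  ultimately show False using nr by metis
qed

lemma orbit_distinct:
  assumes k: "k \<ge> 1" and v: "\<forall>l\<in>set w. valid k l" and x: "x \<in> XS k"
    and nr: "\<forall>n. 0 < n \<and> n < L \<longrightarrow> (perm w ^^ n) x \<noteq> x"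
    and mm: "m < L" "m' < L" and eq: "(perm w ^^ m) x = (perm w ^^ m') x"
  shows "m = m'"
proof (rule ccontr)
  assume "m \<noteq> m'"
  then have "m < m' \<or> m' < m" by auto
  then show False
    using orbit_distinct_lt[OF k v x nr _ _ eq] orbit_distinct_lt[OF k v x nr _ _ eq[symmetric]] mm by blast
qed

lemma main_bound:
  assumes j: "j \<ge> 1" and v: "\<forall>l\<in>set w. valid j l" and lpos: "lenB w \<ge> 1"
    and Y_sub: "\<And>n. n \<ge> 1 \<Longrightarrow> Y n \<subseteq> XS n - {ob n} \<and> Y' n \<subseteq> XS n - {ob n}"
    and Y_disj: "\<And>n. n \<ge> 1 \<Longrightarrow> Y n \<inter> Y' n = {}"
  shows "card (Zset XS Q G aQ aG ob Y Y' j w) \<le> lenB w * mj XS Q G aQ aG j * (card (Y j) + card (Y' j))"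
proof -
  define P where "P = {i. i < length w \<and> \<not> isl (w ! i)}"
  have cP: "card P = lenB w" by (simp add: P_def card_P)
  have fP: "finite P" by (simp add: P_def)
  have "P \<noteq> {}"
  proof
    assume "P = {}"
    then show False using cP lpos by simp
  qed
  then obtain i0 where i0: "i0 \<in> P" by blast
  have vd: "\<And>i. \<forall>l\<in>set (drop (Suc i) w). valid j l" using v by (meson in_set_dropD)
  obtain y0 where y0: "y0 \<in> XS j" "perm (drop (Suc i0) w) y0 = ob j"
    using surj_perm[OF j vd o_in[OF j]] by blast
  define ord where "ord = ordw j w"
  have ord1: "1 \<le> ord" and ordm: "ord \<le> mj XS Q G aQ aG j"
    and ordid: "\<And>y. y \<in> XS j \<Longrightarrow> (perm w ^^ ord) y = y"
    using ordw_props[OF j v] by (auto simp: ord_def)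
  define H where "H = (\<lambda>(i, n). perm (drop (Suc i) w) ((perm w ^^ n) y0)) ` (P \<times> {..<ord})"
  have cH: "card H \<le> lenB w * mj XS Q G aQ aG j"
  proof -
    have "card H \<le> card (P \<times> {..<ord})" unfolding H_def by (rule card_image_le) (simp add: fP)
    also have "\<dots> = lenB w * ord" by (simp add: card_cartesian_product cP)
    also have "\<dots> \<le> lenB w * mj XS Q G aQ aG j" using ordm by simp
    finally show ?thesis .
  qed
  have finY: "finite (Y j)" "finite (Y' j)"
    using Y_sub[OF j] finX[OF j] by (auto intro: finite_subset)
  have sub: "Zset XS Q G aQ aG ob Y Y' j w \<subseteq> ((H \<inter> Y j) \<times> Y' j) \<union> (Y j \<times> (H \<inter> Y' j))"
  proof
    fix st assume st: "st \<in> Zset XS Q G aQ aG ob Y Y' j w"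
    obtain s t where stp: "st = (s, t)" by (cases st)
    from st stp obtain x \<alpha> \<beta> where sY: "s \<in> Y j" "t \<in> Y' j" and x: "x \<in> XS j"
      and aY: "\<forall>i\<ge>1. \<alpha> i \<in> Y i" and bY: "\<forall>i\<ge>1. \<beta> i \<in> Y' i" and as: "\<alpha> j = s" and bt: "\<beta> j = t"
      and cond: "let \<gamma> = stabsec XS j (fj XS aQ aG ob j \<alpha> \<beta> w) [x] in
      if lenB w > 1 then glenB XS Q G aQ aG ob (Suc j) \<alpha> \<beta> \<gamma> = lenB w
      else lex_gt (glenB XS Q G aQ aG ob (Suc j) \<alpha> \<beta> \<gamma>, glenA XS Q G aQ aG ob (Suc j) \<alpha> \<beta> \<gamma>) (1, 0)"
      unfolding Zset_def by blast
    have gd: "good \<alpha> \<beta>"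
      unfolding good_def
    proof (intro allI impI)
      fix n :: nat assume n: "n \<ge> 1"
      have "\<alpha> n \<in> Y n" "\<beta> n \<in> Y' n" using aY bY n by auto
      then show "\<alpha> n \<noteq> \<beta> n \<and> \<alpha> n \<noteq> ob n \<and> \<beta> n \<noteq> ob n" using Y_sub[OF n] Y_disj[OF n] by auto
    qed
    define L where "L = orblen (fj XS aQ aG ob j \<alpha> \<beta> w) [x]"
    have Leq: "L = (LEAST n. 0 < n \<and> (perm w ^^ n) x = x)" unfolding L_def by (rule orblen_eq[OF j v gd x])
    have ex: "0 < ord \<and> (perm w ^^ ord) x = x" using ord1 ordid[OF x] by simp
    have Lp: "0 < L \<and> (perm w ^^ L) x = x" unfolding Leq by (rule LeastI[of _ ord], rule ex)
    have nr: "\<forall>n. 0 < n \<and> n < L \<longrightarrow> (perm w ^^ n) x \<noteq> x"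
      unfolding Leq using not_less_Least by blast
    define r where "r = secpow j \<alpha> \<beta> w L x"
    have vr: "\<forall>l\<in>set r. valid (Suc j) l" unfolding r_def by (rule secpow_valid[OF j v])
    have gam: "stabsec XS j (fj XS aQ aG ob j \<alpha> \<beta> w) [x] = fj XS aQ aG ob (Suc j) \<alpha> \<beta> r"
      unfolding r_def L_def by (rule stabsec_eq[OF j v gd x])
    have j1: "Suc j \<ge> 1" by simp
    note sb = sec_bounds[OF j1 gd vr]
    let ?g = "fj XS aQ aG ob (Suc j) \<alpha> \<beta> r"
    have cond': "if lenB w > 1 then glenB XS Q G aQ aG ob (Suc j) \<alpha> \<beta> ?g = lenB w
      else lex_gt (glenB XS Q G aQ aG ob (Suc j) \<alpha> \<beta> ?g, glenA XS Q G aQ aG ob (Suc j) \<alpha> \<beta> ?g) (1, 0)"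
      using cond gam by (simp add: Let_def)
    have A: "lenA r \<noteq> 0"
    proof
      assume "lenA r = 0"
      from sb(2)[OF this] cond' show False by (auto split: if_splits)
    qed
    have gB: "glenB XS Q G aQ aG ob (Suc j) \<alpha> \<beta> ?g \<ge> lenB w"
      using cond' lpos by (auto simp: lex_gt_def split: if_splits)
    have B: "lenB r \<ge> lenB w" using gB sb(1) by linarith
    have hit: "\<exists>k. perm (drop (Suc i0) w) ((perm w ^^ k) x) = ob j"
    proof (rule ccontr)
      assume nh: "\<not> ?thesis"
      define Bm where "Bm = (\<lambda>m. {i. i < length w \<and> \<not> isl (w ! i) \<and> perm (drop (Suc i) w) ((perm w ^^ m) x) = ob j})"
      have "lenB r = (\<Sum>m<L. card (Bm m))"
        unfolding r_def secpow_lenB Bm_def using lenB_secword_card[OF gd j] by simp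
      also have "\<dots> = card (SIGMA m:{..<L}. Bm m)"
        by (rule card_SigmaI[symmetric]) (auto simp: Bm_def)
      also have "\<dots> \<le> card (P - {i0})"
      proof (rule card_inj_on_le)
        show "inj_on snd (SIGMA m:{..<L}. Bm m)"
        proof (rule inj_onI)
          fix a b assume a: "a \<in> (SIGMA m:{..<L}. Bm m)" and b: "b \<in> (SIGMA m:{..<L}. Bm m)" and e: "snd a = snd b"
          obtain m i where ai: "a = (m, i)" by (cases a)
          obtain m' i' where bi: "b = (m', i')" by (cases b)
          have ii: "i' = i" using e ai bi by simp
          have m: "m < L" "m' < L" using a b ai bi by auto
          have h1: "perm (drop (Suc i) w) ((perm w ^^ m) x) = ob j" using a ai by (simp add: Bm_def)
          have h2: "perm (drop (Suc i) w) ((perm w ^^ m') x) = ob j" using b bi ii by (simp add: Bm_def)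
          have "(perm w ^^ m) x = (perm w ^^ m') x"
            by (rule inj_onD[OF inj_perm[OF j vd, of i]]) (use h1 h2 perm_pow_XS[OF j v x] in auto)
          then have "m = m'" by (rule orbit_distinct[OF j v x nr m])
          then show "a = b" using ai bi ii by simp
        qed
        show "snd ` (SIGMA m:{..<L}. Bm m) \<subseteq> P - {i0}"
          using nh by (auto simp: Bm_def P_def)
        show "finite (P - {i0})" using fP by simp
      qed
      also have "\<dots> < card P" by (rule card_Diff1_less[OF fP i0])
      finally show False using B cP by simp
    qed
    then obtain k where k: "perm (drop (Suc i0) w) ((perm w ^^ k) x) = ob j" by blast
    have xk: "(perm w ^^ k) x = y0"
      by (rule inj_onD[OF inj_perm[OF j vd, of i0]]) (use k y0 perm_pow_XS[OF j v x] in auto)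
    have "lenA r = (\<Sum>m<L. lenA (secword j \<alpha> \<beta> w ((perm w ^^ m) x)))"
      unfolding r_def by (rule secpow_lenA)
    then obtain m where m: "m < L" "lenA (secword j \<alpha> \<beta> w ((perm w ^^ m) x)) > 0"
      using A by (metis (no_types, lifting) gr0I sum.neutral lessThan_iff)
    obtain i where i: "i < length w" "\<not> isl (w ! i)"
      "perm (drop (Suc i) w) ((perm w ^^ m) x) = s \<or> perm (drop (Suc i) w) ((perm w ^^ m) x) = t"
      using lenA_secword_pos[OF gd j m(2)] as bt by blast
    have fx: "\<And>y. y \<in> XS j \<Longrightarrow> perm w y \<in> XS j" using perm_XS[OF j v] by blast
    define N where "N = m + ord * k - k"
    have kle: "k \<le> ord * k" using ord1 by simp
    have Nk: "N + k = m + ord * k" unfolding N_def using kle by linarith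
    have "(perm w ^^ N) y0 = (perm w ^^ N) ((perm w ^^ k) x)" using xk by simp
    also have "\<dots> = (perm w ^^ (N + k)) x" by (simp only: funpow_add comp_apply)
    also have "\<dots> = (perm w ^^ (m + ord * k)) x" by (simp only: Nk)
    also have "\<dots> = (perm w ^^ m) ((perm w ^^ (ord * k)) x)"
      by (simp only: funpow_add comp_apply)
    also have "(perm w ^^ (ord * k)) x = x" by (rule perm_pow_mult[OF ordid fx x])
    finally have e1: "(perm w ^^ N) y0 = (perm w ^^ m) x" .
    have e2: "(perm w ^^ N) y0 = (perm w ^^ (N mod ord)) y0" by (rule perm_pow_mod[OF ordid fx y0(1)])
    have inH: "perm (drop (Suc i) w) ((perm w ^^ m) x) \<in> H"
      unfolding H_def using e1 e2 i ord1
      by (intro image_eqI[of _ _ "(i, N mod ord)"]) (auto simp: P_def)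
    show "st \<in> ((H \<inter> Y j) \<times> Y' j) \<union> (Y j \<times> (H \<inter> Y' j))"
      using i(3) inH sY stp by auto
  qed
  have "card (Zset XS Q G aQ aG ob Y Y' j w) \<le> card (((H \<inter> Y j) \<times> Y' j) \<union> (Y j \<times> (H \<inter> Y' j)))"
    by (rule card_mono[OF _ sub]) (use finY in auto)
  also have "\<dots> \<le> card ((H \<inter> Y j) \<times> Y' j) + card (Y j \<times> (H \<inter> Y' j))" by (rule card_Un_le)
  also have "\<dots> = card (H \<inter> Y j) * card (Y' j) + card (Y j) * card (H \<inter> Y' j)"
    by (simp add: card_cartesian_product)
  also have "\<dots> \<le> card H * card (Y' j) + card (Y j) * card H"
  proof -
    have fH: "finite H" unfolding H_def using fP by simp
    have "card (H \<inter> Y j) \<le> card H" "card (H \<inter> Y' j) \<le> card H"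
      using fH by (auto intro: card_mono)
    then show ?thesis by (simp add: add_mono mult_le_mono)
  qed
  also have "\<dots> = card H * (card (Y j) + card (Y' j))" by (simp add: algebra_simps)
  also have "\<dots> \<le> lenB w * mj XS Q G aQ aG j * (card (Y j) + card (Y' j))"
    using cH by (simp add: mult_le_mono)
  finally show ?thesis .
qed

end

theorem lemma2p6:
  fixes Q :: "('q, 'a) monoid_scheme" and G :: "('g, 'b) monoid_scheme"
    and XS :: "nat \<Rightarrow> 'x set"
    and aQ :: "nat \<Rightarrow> 'q \<Rightarrow> 'x \<Rightarrow> 'x" and aG :: "nat \<Rightarrow> 'g \<Rightarrow> 'x \<Rightarrow> 'x"
    and ob :: "nat \<Rightarrow> 'x" and Y Y' :: "nat \<Rightarrow> 'x set"
    and j :: nat and w :: "(('x \<Rightarrow> 'x) + ('q \<times> 'g)) list"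
  assumes grpQ: "group Q" and grpG: "group G"
    and fin: "\<And>n. n \<ge> 1 \<Longrightarrow> finite (XS n) \<and> card (XS n) \<ge> 2"
    and actQ: "\<And>n. n \<ge> 1 \<Longrightarrow> group_action Q (XS n) (aQ n)"
    and actG: "\<And>n. n \<ge> 1 \<Longrightarrow> group_action G (XS n) (aG n)"
    and A1: "fin_gen Q" "fin_gen G"
    and A2: "derived Q (carrier Q) = carrier Q"
    and A3_trans: "\<And>n x y. n \<ge> 1 \<Longrightarrow> x \<in> XS n \<Longrightarrow> y \<in> XS n \<Longrightarrow>
                     \<exists>a \<in> Agrp XS Q G aQ aG n. a x = y"
    and A3_gen: "\<And>n. n \<ge> 1 \<Longrightarrow> Agrp XS Q G aQ aG n =
                   generate (BijGroup (XS n))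
                     {aG n g \<otimes>\<^bsub>BijGroup (XS n)\<^esub> aQ n q \<otimes>\<^bsub>BijGroup (XS n)\<^esub> inv\<^bsub>BijGroup (XS n)\<^esub> (aG n g)
                       | g q. g \<in> carrier G \<and> q \<in> carrier Q}"
    and o_in: "\<And>n. n \<ge> 1 \<Longrightarrow> ob n \<in> XS n"
    and Y_sub: "\<And>n. n \<ge> 1 \<Longrightarrow> Y n \<subseteq> XS n - {ob n} \<and> Y' n \<subseteq> XS n - {ob n}"
    and Y_ne: "\<And>n. n \<ge> 1 \<Longrightarrow> Y n \<noteq> {} \<and> Y' n \<noteq> {}"
    and Y_disj: "\<And>n. n \<ge> 1 \<Longrightarrow> Y n \<inter> Y' n = {}"
    and j: "j \<ge> 1"
    and w: "w \<in> Fj XS Q G aQ aG j"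
    and len: "lex_gt (lenB w, lenA w) (1, 0)"
  shows "card (Zset XS Q G aQ aG ob Y Y' j w) \<le> lenB w * mj XS Q G aQ aG j * (card (Y j) + card (Y' j))"
proof -
  have st: "setting XS Q G aQ aG ob"
    unfolding setting_def using grpQ grpG fin actQ actG o_in by auto
  interpret S: setting XS Q G aQ aG ob by (rule st)
  have v: "\<forall>l\<in>set w. S.valid j l"
  proof
    fix l assume l: "l \<in> set w"
    then show "S.valid j l" using w unfolding Fj_def S.valid_def
      by (auto split: sum.splits prod.splits)
  qed
  have lpos: "lenB w \<ge> 1" using len by (auto simp: lex_gt_def)
  show ?thesis by (rule S.main_bound[OF j v lpos Y_sub Y_disj])
qed

end
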